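(* Let $E\to M$ be a vector bundle with nondegenerate symmetric fiber metric $h$ and metric connection $\nabla$, and consider the Rothstein–Poisson bracket on $\Gamma^\infty(\bigwedge^\bullet\tau^\sharp E)$. Let $u_1,\dots,u_K$ be a local frame of $E$ such that the functions $h_{AB}=h(u_A,u_B)$ are constant, and define the local sections $$r_i=p_i-\tfrac12\tau^\sharp\big(h^{AB}\Gamma^C_{iA}u_B\wedge u_C\big).$$ Then $\{q^i,r_j\}=\delta^i_j$, $\{\tau^\sharp u_A,\tau^\sharp u_B\}=h_{AB}$, and $\{q^i,q^j\}=\{q^i,\tau^\sharp u_A\}=\{r_i,r_j\}=\{r_i,\tau^\sharp u_A\}=0$.
   Context: $\tau:T^\ast M\to M$ is the cotangent projection, $(q^i,p_i)$ the bundle coordinates on $T^\ast M$ induced by local coordinates $x^i$ on $M$, $\tau^\sharp E$ the pullback bundle with pullback connection $\tau^\sharp\nabla$, and $\tau^\sharp u_A$ the pullback frame. $(h^{AB})$ is the inverse matrix of $(h_{AB})$, $\Gamma^B_{iA}$ the Christoffel symbols ($\nabla_{\partial/\partial x^i}u_A=\Gamma^B_{iA}u_B$), $R^C_{Aij}$ the curvature components ($R(\partial_i,\partial_j)u_A=R^C_{Aij}u_C$), $u^A$ the dual frame. For $\sigma\in E^\ast$, $i(\sigma)$ is the left interior product on $\bigwedge^\bullet E$ and $j(\sigma)\psi=(-1)^{m-1}i(\sigma)\psi$ for $\psi$ of Grassmann degree $m$; $\partial\varphi/\partial p_i:=(\tau^\sharp\nabla)_{\partial/\partial p_i}\varphi$.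 The Rothstein–Poisson bracket is the super-Poisson bracket on $\Gamma^\infty(\bigwedge^\bullet\tau^\sharp E)$ (functions on $T^\ast M$ included in degree $0$) given locally by $\{\varphi,\psi\}=(\tau^\sharp\nabla)_{\partial/\partial q^i}\varphi\wedge\frac{\partial\psi}{\partial p_i}-\frac{\partial\varphi}{\partial p_i}\wedge(\tau^\sharp\nabla)_{\partial/\partial q^i}\psi-\frac12\tau^\sharp(h^{AB}R^C_{Aij}u_B\wedge u_C)\wedge\frac{\partial\varphi}{\partial p_i}\wedge\frac{\partial\psi}{\partial p_j}+h_{AB}\,j(u^A)\varphi\wedge i(u^B)\psi$. *)

theory Defs
  imports "HOL-Analysis.Analysis"
begin

text \<open>Everything is local: a coordinate chart with image an open set U in real^'n::finite
 (coordinates x^i, i :: 'n), a local frame u_0,...,u_{K-1} of E over it (frame indices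
 are naturals A < K).  T*U is U x real^'n::finite with bundle coordinates (q,p).
 Elements of the exterior algebra of the fibre are represented by their coefficients
 with respect to the basis u_S = u_{s1} wedge ... wedge u_{sm} (s1 < ... < sm, S a finite
 subset of {..<K}).\<close>

type_synonym ext = "nat set \<Rightarrow> real"
type_synonym 'n sect = "(real^'n) \<times> (real^'n) \<Rightarrow> ext"

definition wsign :: "nat set \<Rightarrow> nat set \<Rightarrow> real" where
  "wsign S T = (-1) ^ card {(s,t). s \<in> S \<and> t \<in> T \<and> t < s}"

text \<open>u_S wedge u_T = wsign S T * u_(S union T) for disjoint S, T.\<close>
definition wedge :: "ext \<Rightarrow> ext \<Rightarrow> ext" (infixl "\<and>\<^sub>e" 70) where
  "wedge a b = (\<lambda>S. \<Sum>T\<in>Pow S. wsign T (S - T) * a T * b (S - T))"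

definition escal :: "real \<Rightarrow> ext" where
  "escal c = (\<lambda>S. if S = {} then c else 0)"

definition ebasis :: "nat \<Rightarrow> ext" where
  "ebasis A = (\<lambda>S. if S = {A} then 1 else 0)"

text \<open>left interior product i(u^A): i(u^A)(u_A wedge u_S) = u_S for A not in S\<close>
definition eint :: "nat \<Rightarrow> ext \<Rightarrow> ext" where
  "eint A a = (\<lambda>S. if A \<in> S then 0 else wsign {A} S * a (insert A S))"

text \<open>j(u^A) psi = (-1)^(m-1) i(u^A) psi on Grassmann degree m (extended linearly);
 the output of i(u^A) on degree m has degree m-1.\<close>
definition ejnt :: "nat \<Rightarrow> ext \<Rightarrow> ext" where
  "ejnt A a = (\<lambda>S. (-1) ^ card S * eint A a S)"

definition pdiff :: "((real^'n::finite) \<Rightarrow> real) \<Rightarrow> 'n \<Rightarrow> (real^'n::finite) \<Rightarrow> real" where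
  "pdiff f i q = deriv (\<lambda>t. f (q + t *\<^sub>R axis i 1)) 0"

definition iter_pdiff :: "'n list \<Rightarrow> ((real^'n::finite) \<Rightarrow> real) \<Rightarrow> (real^'n::finite) \<Rightarrow> real" where
  "iter_pdiff is f = foldr (\<lambda>i g. pdiff g i) is f"

definition smooth_on :: "(real^'n::finite) set \<Rightarrow> ((real^'n::finite) \<Rightarrow> real) \<Rightarrow> bool" where
  "smooth_on U f \<longleftrightarrow> (\<forall>is. continuous_on U (iter_pdiff is f) \<and>
      (\<forall>i. \<forall>q\<in>U. (\<lambda>t. iter_pdiff is f (q + t *\<^sub>R axis i 1)) differentiable (at 0)))"

definition dq :: "('n::finite) sect \<Rightarrow> 'n \<Rightarrow> 'n sect" where
  "dq \<phi> i = (\<lambda>(q,p) S. deriv (\<lambda>t. \<phi> (q + t *\<^sub>R axis i 1, p) S) 0)"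

definition dp :: "('n::finite) sect \<Rightarrow> 'n \<Rightarrow> 'n sect" where
  "dp \<phi> i = (\<lambda>(q,p) S. deriv (\<lambda>t. \<phi> (q, p + t *\<^sub>R axis i 1) S) 0)"

text \<open>Gam q i A B is the Christoffel symbol Gamma^B_{iA}(q):
 nabla_{d/dx^i} u_A = sum_B Gamma^B_{iA} u_B.  The induced connection on the exterior
 bundle acts by the derivation extending u_A |-> sum_B Gamma^B_{iA} u_B, i.e.
 sum_{A,B} Gamma^B_{iA} u_B wedge i(u^A).\<close>
definition conn_der :: "nat \<Rightarrow> ((real^'n::finite) \<Rightarrow> 'n \<Rightarrow> nat \<Rightarrow> nat \<Rightarrow> real) \<Rightarrow> (real^'n::finite) \<Rightarrow> 'n \<Rightarrow> ext \<Rightarrow> ext" where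
  "conn_der K Gam q i a = (\<lambda>S. \<Sum>A<K. \<Sum>B<K. Gam q i A B * (ebasis B \<and>\<^sub>e eint A a) S)"

text \<open>pullback connection in direction d/dq^i (in direction d/dp_i it is just dp)\<close>
definition nablaq :: "nat \<Rightarrow> ((real^'n::finite) \<Rightarrow> 'n \<Rightarrow> nat \<Rightarrow> nat \<Rightarrow> real) \<Rightarrow> 'n sect \<Rightarrow> 'n \<Rightarrow> 'n sect" where
  "nablaq K Gam \<phi> i = (\<lambda>(q,p) S. dq \<phi> i (q,p) S + conn_der K Gam q i (\<phi> (q,p)) S)"

definition pb :: "((real^'n::finite) \<Rightarrow> ext) \<Rightarrow> 'n sect" where
  "pb s = (\<lambda>(q,p). s q)"

text \<open>curv K Gam q C A i j = R^C_{Aij}(q), where R(d_i,d_j)u_A = sum_C R^C_{Aij} u_C and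
 R(X,Y) = nabla_X nabla_Y - nabla_Y nabla_X (coordinate fields commute).\<close>
definition curv :: "nat \<Rightarrow> ((real^'n::finite) \<Rightarrow> 'n \<Rightarrow> nat \<Rightarrow> nat \<Rightarrow> real) \<Rightarrow> (real^'n::finite) \<Rightarrow> nat \<Rightarrow> nat \<Rightarrow> 'n \<Rightarrow> 'n \<Rightarrow> real" where
  "curv K Gam q C A i j =
     nablaq K Gam (nablaq K Gam (pb (\<lambda>_. ebasis A)) j) i (q,0) {C}
   - nablaq K Gam (nablaq K Gam (pb (\<lambda>_. ebasis A)) i) j (q,0) {C}"

definition minv :: "nat \<Rightarrow> (nat \<Rightarrow> nat \<Rightarrow> real) \<Rightarrow> nat \<Rightarrow> nat \<Rightarrow> real" where
  "minv K h = (THE g. (\<forall>A<K. \<forall>C<K. (\<Sum>B<K. g A B * h B C) = (if A = C then 1 else 0)) \<and>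
                      (\<forall>A<K. \<forall>C<K. (\<Sum>B<K. h A B * g B C) = (if A = C then 1 else 0)) \<and>
                      (\<forall>A B. A \<ge> K \<or> B \<ge> K \<longrightarrow> g A B = 0))"

definition fiber_metric :: "(real^'n::finite) set \<Rightarrow> nat \<Rightarrow> ((real^'n::finite) \<Rightarrow> nat \<Rightarrow> nat \<Rightarrow> real) \<Rightarrow> bool" where
  "fiber_metric U K h \<longleftrightarrow>
     (\<forall>A<K. \<forall>B<K. smooth_on U (\<lambda>q. h q A B)) \<and>
     (\<forall>q\<in>U. \<forall>A<K. \<forall>B<K. h q A B = h q B A) \<and>
     (\<forall>q\<in>U. \<forall>v::nat \<Rightarrow> real. (\<forall>B<K. (\<Sum>A<K. v A * h q A B) = 0) \<longrightarrow> (\<forall>A<K. v A = 0))"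

definition metric_connection :: "(real^'n::finite) set \<Rightarrow> nat \<Rightarrow> ((real^'n::finite) \<Rightarrow> nat \<Rightarrow> nat \<Rightarrow> real)
      \<Rightarrow> ((real^'n::finite) \<Rightarrow> 'n \<Rightarrow> nat \<Rightarrow> nat \<Rightarrow> real) \<Rightarrow> bool" where
  "metric_connection U K h Gam \<longleftrightarrow>
     (\<forall>i. \<forall>A<K. \<forall>B<K. smooth_on U (\<lambda>q. Gam q i A B)) \<and>
     (\<forall>q\<in>U. \<forall>i. \<forall>A<K. \<forall>B<K.
        ((\<lambda>t. h (q + t *\<^sub>R axis i 1) A B) has_real_derivative
          (\<Sum>C<K. Gam q i A C * h q C B + Gam q i B C * h q A C)) (at 0))"

definition esum :: "'a set \<Rightarrow> ('a \<Rightarrow> ext) \<Rightarrow> ext" where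
  "esum I f = (\<lambda>S. \<Sum>x\<in>I. f x S)"

definition rothstein :: "nat \<Rightarrow> ((real^'n::finite) \<Rightarrow> nat \<Rightarrow> nat \<Rightarrow> real)
    \<Rightarrow> ((real^'n::finite) \<Rightarrow> 'n \<Rightarrow> nat \<Rightarrow> nat \<Rightarrow> real) \<Rightarrow> 'n sect \<Rightarrow> 'n sect \<Rightarrow> 'n sect" where
  "rothstein K h Gam \<phi> \<psi> = (\<lambda>(q,p). \<lambda>S.
      esum UNIV (\<lambda>i. nablaq K Gam \<phi> i (q,p) \<and>\<^sub>e dp \<psi> i (q,p)) S
    - esum UNIV (\<lambda>i. dp \<phi> i (q,p) \<and>\<^sub>e nablaq K Gam \<psi> i (q,p)) S
    - (1/2) * esum UNIV (\<lambda>i. esum UNIV (\<lambda>j.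
          (esum {..<K} (\<lambda>A. esum {..<K} (\<lambda>B. esum {..<K} (\<lambda>C. \<lambda>T.
               minv K (h q) A B * curv K Gam q C A i j * (ebasis B \<and>\<^sub>e ebasis C) T))))
          \<and>\<^sub>e dp \<phi> i (q,p) \<and>\<^sub>e dp \<psi> j (q,p))) S
    + esum {..<K} (\<lambda>A. esum {..<K} (\<lambda>B. \<lambda>T.
          h q A B * (ejnt A (\<phi> (q,p)) \<and>\<^sub>e eint B (\<psi> (q,p))) T)) S)"

definition qfun :: "('n::finite) \<Rightarrow> 'n sect" where "qfun i = (\<lambda>(q,p). escal (q $ i))"
definition pfun :: "('n::finite) \<Rightarrow> 'n sect" where "pfun i = (\<lambda>(q,p). escal (p $ i))"

definition rfun :: "nat \<Rightarrow> ((real^'n::finite) \<Rightarrow> nat \<Rightarrow> nat \<Rightarrow> real)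
    \<Rightarrow> ((real^'n::finite) \<Rightarrow> 'n \<Rightarrow> nat \<Rightarrow> nat \<Rightarrow> real) \<Rightarrow> 'n \<Rightarrow> 'n sect" where
  "rfun K h Gam i = (\<lambda>x S. pfun i x S - (1/2) * pb (\<lambda>q.
      esum {..<K} (\<lambda>A. esum {..<K} (\<lambda>B. esum {..<K} (\<lambda>C. \<lambda>T.
         minv K (h q) A B * Gam q i A C * (ebasis B \<and>\<^sub>e ebasis C) T)))) x S)"

end

theory Submission
  imports Defs "HOL-Library.Function_Algebras" "Jordan_Normal_Form.Determinant"
begin


abbreviation w2 :: "nat \<Rightarrow> nat \<Rightarrow> ext" where "w2 B C \<equiv> ebasis B \<and>\<^sub>e ebasis C"

definition form1 :: "nat \<Rightarrow> (nat \<Rightarrow> real) \<Rightarrow> ext" where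
  "form1 K v = (\<lambda>S. \<Sum>B<K. v B * ebasis B S)"
definition form2 :: "nat \<Rightarrow> (nat \<Rightarrow> nat \<Rightarrow> real) \<Rightarrow> ext" where
  "form2 K X = (\<lambda>S. \<Sum>B<K. \<Sum>C<K. X B C * w2 B C S)"

lemma wedge_inf: "infinite S \<Longrightarrow> (a \<and>\<^sub>e b) S = 0"
  by (simp add: wedge_def)

lemma wsign_empty1[simp]: "wsign {} S = 1" by (simp add: wsign_def)
lemma wsign_empty2[simp]: "wsign S {} = 1" by (simp add: wsign_def)

lemma wedge_escal_left: "finite S \<Longrightarrow> (escal c \<and>\<^sub>e b) S = c * b S"
proof -
  assume f: "finite S"
  have "(escal c \<and>\<^sub>e b) S = (\<Sum>T\<in>Pow S. if T = {} then c * b S else 0)"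
    unfolding wedge_def escal_def by (rule sum.cong) auto
  also have "\<dots> = c * b S" using f by (simp add: sum.delta)
  finally show ?thesis .
qed

lemma wedge_escal_right: "finite S \<Longrightarrow> (a \<and>\<^sub>e escal c) S = c * a S"
proof -
  assume f: "finite S"
  have "(a \<and>\<^sub>e escal c) S = (\<Sum>T\<in>Pow S. if T = S then c * a S else 0)"
    unfolding wedge_def escal_def by (rule sum.cong) (auto simp: Diff_eq_empty_iff)
  also have "\<dots> = c * a S" using f by (simp add: sum.delta)
  finally show ?thesis .
qed

lemma escal0: "escal 0 = (\<lambda>_. 0)" by (simp add: escal_def fun_eq_iff)
lemma wedge_zero_left[simp]: "((\<lambda>_. 0) \<and>\<^sub>e b) = (\<lambda>_. 0)" by (simp add: wedge_def fun_eq_iff)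
lemma wedge_zero_right[simp]: "(a \<and>\<^sub>e (\<lambda>_. 0)) = (\<lambda>_. 0)" by (simp add: wedge_def fun_eq_iff)

lemma escal_inf: "infinite S \<Longrightarrow> escal c S = 0" by (auto simp: escal_def)
lemma ebasis_inf: "infinite S \<Longrightarrow> ebasis B S = 0" by (auto simp: ebasis_def)

lemma wedge_ebasis_escal: "(ebasis B \<and>\<^sub>e escal c) = (\<lambda>S. c * ebasis B S)"
proof (rule ext)
  fix S show "(ebasis B \<and>\<^sub>e escal c) S = c * ebasis B S"
    by (cases "finite S") (auto simp: wedge_escal_right wedge_inf ebasis_inf)
qed

lemma wedge_escal_escal: "(escal a \<and>\<^sub>e escal c) = escal (a * c)"
proof (rule ext)
  fix S show "(escal a \<and>\<^sub>e escal c) S = escal (a * c) S"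
    by (cases "finite S") (auto simp: wedge_escal_right wedge_inf escal_inf, auto simp: escal_def)
qed

lemma wedge_sum_left: "((\<lambda>T. \<Sum>x\<in>I. f x T) \<and>\<^sub>e b) S = (\<Sum>x\<in>I. (f x \<and>\<^sub>e b) S)"
  unfolding wedge_def by (simp add: sum_distrib_left sum_distrib_right sum.swap[of _ I] algebra_simps)
lemma wedge_sum_right: "(a \<and>\<^sub>e (\<lambda>T. \<Sum>x\<in>I. f x T)) S = (\<Sum>x\<in>I. (a \<and>\<^sub>e f x) S)"
  unfolding wedge_def by (simp add: sum_distrib_left sum_distrib_right sum.swap[of _ I] algebra_simps)
lemma wedge_scale_left: "((\<lambda>T. c * a T) \<and>\<^sub>e b) S = c * (a \<and>\<^sub>e b) S"
  unfolding wedge_def by (simp add: sum_distrib_left algebra_simps)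
lemma wedge_scale_right: "(a \<and>\<^sub>e (\<lambda>T. c * b T)) S = c * (a \<and>\<^sub>e b) S"
  unfolding wedge_def by (simp add: sum_distrib_left algebra_simps)
lemma wedge_diff_left: "((\<lambda>T. a T - a' T) \<and>\<^sub>e b) S = (a \<and>\<^sub>e b) S - (a' \<and>\<^sub>e b) S"
  unfolding wedge_def by (simp add: sum_subtractf algebra_simps)
lemma wedge_diff_right: "(a \<and>\<^sub>e (\<lambda>T. b T - b' T)) S = (a \<and>\<^sub>e b) S - (a \<and>\<^sub>e b') S"
  unfolding wedge_def by (simp add: sum_subtractf algebra_simps)

lemma w2_eq: "w2 B C = (\<lambda>S. if B \<noteq> C \<and> S = {B, C} then (if B < C then 1 else -1) else 0)"
proof (rule ext)
  fix S
  show "w2 B C S = (if B \<noteq> C \<and> S = {B, C} then (if B < C then 1 else -1) else 0)"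
  proof (cases "finite S")
    case False then show ?thesis by (auto simp: wedge_inf)
  next
    case True
    have "w2 B C S = (\<Sum>T\<in>Pow S. if T = {B} then wsign {B} (S - {B}) * ebasis C (S - {B}) else 0)"
      unfolding wedge_def by (rule sum.cong) (auto simp: ebasis_def)
    also have "\<dots> = (if B \<in> S then wsign {B} (S - {B}) * ebasis C (S - {B}) else 0)"
      using True by (simp add: sum.delta)
    also have "\<dots> = (if B \<noteq> C \<and> S = {B, C} then (if B < C then 1 else -1) else 0)"
    proof -
      have a: "wsign {B} {C} = (if B < C then 1 else -1)" if "B \<noteq> C"
      proof -
        have "{(s, t). s \<in> {B} \<and> t \<in> {C} \<and> t < s} = (if C < B then {(B,C)} else {})" by auto
        then show ?thesis using that by (simp add: wsign_def)
      qed
      show ?thesis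
        by (auto simp: ebasis_def a)
    qed
    finally show ?thesis .
  qed
qed

lemma wsign_single: "wsign {A} {C} = (if C < A then -1 else 1)"
proof -
  have "{(s, t). s \<in> {A} \<and> t \<in> {C} \<and> t < s} = (if C < A then {(A,C)} else {})" by auto
  then show ?thesis by (simp add: wsign_def)
qed

lemma eint_sum: "eint A (\<lambda>S. \<Sum>x\<in>I. f x S) = (\<lambda>S. \<Sum>x\<in>I. eint A (f x) S)"
  by (auto simp: eint_def fun_eq_iff sum_distrib_left)
lemma eint_scale: "eint A (\<lambda>S. c * a S) = (\<lambda>S. c * eint A a S)"
  by (auto simp: eint_def fun_eq_iff)
lemma eint_diff: "eint A (\<lambda>S. a S - b S) = (\<lambda>S. eint A a S - eint A b S)"
  by (auto simp: eint_def fun_eq_iff algebra_simps)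
lemma eint_escal: "eint A (escal c) = (\<lambda>_. 0)"
  by (auto simp: eint_def fun_eq_iff escal_def)
lemma eint_ebasis: "eint A (ebasis B) = escal (if A = B then 1 else 0)"
  by (auto simp: eint_def fun_eq_iff escal_def ebasis_def)
lemma eint_w2: "eint A (w2 B C) = (\<lambda>S. (if A = B then ebasis C S else 0) - (if A = C then ebasis B S else 0))"
proof (rule ext)
  fix S
  show "eint A (w2 B C) S = (if A = B then ebasis C S else 0) - (if A = C then ebasis B S else 0)"
  proof (cases "A \<in> S")
    case True then show ?thesis by (auto simp: eint_def ebasis_def)
  next
    case nA: False
    have k: "(insert X S = {X, Y}) = (S = {Y})" if "X \<notin> S" "X \<noteq> Y" for X Y
    proof
      assume e: "insert X S = {X, Y}"
      have "S \<subseteq> {Y}"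
      proof
        fix z assume z: "z \<in> S"
        then have "z \<in> {X, Y}" using e by (metis insertCI)
        then show "z \<in> {Y}" using that(1) z by auto
      qed
      moreover have "Y \<in> S" using e that(2) by (metis insertE insertI1 insert_commute)
      ultimately show "S = {Y}" by blast
    qed auto
    show ?thesis
    proof (cases "B = C")
      case True then show ?thesis by (simp add: eint_def w2_eq)
    next
      case BC: False
      show ?thesis
      proof (cases "A = B")
        case True
        then show ?thesis using nA BC k[of B C] unfolding eint_def w2_eq by (auto simp: ebasis_def wsign_single)
      next
        case nAB: False
        show ?thesis
        proof (cases "A = C")
          case True
          then have "insert A S = {B, C} \<longleftrightarrow> S = {B}" using nA BC k[of C B] by (auto simp: insert_commute)
          then show ?thesis using True nA BC unfolding eint_def w2_eq by (auto simp: ebasis_def wsign_single)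
        next
          case False
          then have "insert A S \<noteq> {B, C}" using nAB by auto
          then show ?thesis using False nAB unfolding eint_def w2_eq by (auto simp: ebasis_def)
        qed
      qed
    qed
  qed
qed

lemma sum_if_const: "(\<Sum>x\<in>I. if P then f x else 0) = (if P then (\<Sum>x\<in>I. f x) else 0)"
  by simp

lemma eint_form1: "A < K \<Longrightarrow> eint A (form1 K v) = escal (v A)"
  unfolding form1_def eint_sum eint_scale eint_ebasis
  by (auto simp: fun_eq_iff escal_def if_distrib[of "\<lambda>x. _ * x"] cong: if_cong)

lemma eint_form2: "A < K \<Longrightarrow> eint A (form2 K X) = form1 K (\<lambda>C. X A C - X C A)"
  unfolding form2_def eint_sum eint_scale eint_w2 form1_def
  by (auto simp: fun_eq_iff algebra_simps sum_subtractf sum.distrib if_distrib[of "\<lambda>x. _ * x"] sum_if_const cong: if_cong)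

lemma form1_card: "(-1) ^ card S * form1 K v S = - form1 K v S"
proof (cases "\<exists>B. S = {B}")
  case True then show ?thesis by auto
next
  case False
  then have "form1 K v S = 0" by (auto simp: form1_def ebasis_def)
  then show ?thesis by simp
qed

lemma ejnt_escal: "ejnt A (escal c) = (\<lambda>_. 0)"
  by (simp add: ejnt_def eint_escal)
lemma ejnt_ebasis: "ejnt A (ebasis B) = escal (if A = B then 1 else 0)"
  by (auto simp: ejnt_def eint_ebasis fun_eq_iff escal_def)

lemma wedge_ebasis_form1: "(ebasis B \<and>\<^sub>e form1 K v) S = (\<Sum>C<K. v C * w2 B C S)"
  unfolding form1_def wedge_sum_right wedge_scale_right ..

lemma wedge_form1_form1: "(form1 K v \<and>\<^sub>e form1 K u) S = form2 K (\<lambda>B C. v B * u C) S"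
  unfolding form1_def form2_def wedge_sum_right wedge_scale_right wedge_sum_left wedge_scale_left
  by (subst sum.swap) (simp add: sum_distrib_left algebra_simps)

lemma w2_anti: "w2 C B S = - w2 B C S"
  unfolding w2_eq by (auto simp: insert_commute)

lemma form2_sym_zero:
  assumes "\<And>B C. B < K \<Longrightarrow> C < K \<Longrightarrow> X B C = X C B"
  shows "form2 K X S = 0"
proof -
  have "form2 K X S = (\<Sum>C<K. \<Sum>B<K. X B C * w2 B C S)"
    unfolding form2_def by (rule sum.swap)
  also have "\<dots> = (\<Sum>C<K. \<Sum>B<K. - (X C B * w2 C B S))"
    using assms by (intro sum.cong refl) (metis w2_anti mult_minus_right minus_minus lessThan_iff)
  also have "\<dots> = - form2 K X S"
    unfolding form2_def by (simp add: sum_negf)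
  finally show ?thesis by simp
qed

lemma form2_cong: "(\<And>B C. B < K \<Longrightarrow> C < K \<Longrightarrow> X B C = Y B C) \<Longrightarrow> form2 K X = form2 K Y"
  unfolding form2_def by (auto intro!: sum.cong ext)
lemma form1_cong: "(\<And>B. B < K \<Longrightarrow> v B = u B) \<Longrightarrow> form1 K v = form1 K u"
  unfolding form1_def by (auto intro!: sum.cong ext)

lemma form2_add: "form2 K X S + form2 K Y S = form2 K (\<lambda>B C. X B C + Y B C) S"
  unfolding form2_def by (simp add: sum.distrib algebra_simps)
lemma form2_diff: "form2 K X S - form2 K Y S = form2 K (\<lambda>B C. X B C - Y B C) S"
  unfolding form2_def by (simp add: sum_subtractf algebra_simps)
lemma form2_scale: "c * form2 K X S = form2 K (\<lambda>B C. c * X B C) S"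
  unfolding form2_def by (simp add: sum_distrib_left algebra_simps)
lemma form1_add: "form1 K X S + form1 K Y S = form1 K (\<lambda>B. X B + Y B) S"
  unfolding form1_def by (simp add: sum.distrib algebra_simps)
lemma form1_diff: "form1 K X S - form1 K Y S = form1 K (\<lambda>B. X B - Y B) S"
  unfolding form1_def by (simp add: sum_subtractf algebra_simps)
lemma form1_scale: "c * form1 K X S = form1 K (\<lambda>B. c * X B) S"
  unfolding form1_def by (simp add: sum_distrib_left algebra_simps)
lemma form1_zero: "(\<And>B. B < K \<Longrightarrow> v B = 0) \<Longrightarrow> form1 K v S = 0"
  unfolding form1_def by simp


type_synonym matr = "nat \<Rightarrow> nat \<Rightarrow> real"

definition mm :: "nat \<Rightarrow> matr \<Rightarrow> matr \<Rightarrow> matr" where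
  "mm K X Y = (\<lambda>A C. \<Sum>B<K. X A B * Y B C)"
definition tr :: "matr \<Rightarrow> matr" where "tr X = (\<lambda>A B. X B A)"
definition cut :: "nat \<Rightarrow> matr \<Rightarrow> matr" where
  "cut K X = (\<lambda>A B. if A < K \<and> B < K then X A B else 0)"
definition idm :: "nat \<Rightarrow> matr" where "idm K = (\<lambda>A B. if A = B \<and> A < K then 1 else 0)"
definition zo :: "nat \<Rightarrow> matr \<Rightarrow> bool" where
  "zo K X \<longleftrightarrow> (\<forall>A B. \<not> (A < K \<and> B < K) \<longrightarrow> X A B = 0)"

lemma mm_assoc: "mm K (mm K X Y) Z = mm K X (mm K Y Z)"
  unfolding mm_def by (auto simp: fun_eq_iff sum_distrib_left sum_distrib_right algebra_simps intro: sum.swap)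

lemma mm_add_l: "mm K (X + Y) Z = mm K X Z + mm K Y Z"
  unfolding mm_def by (auto simp: fun_eq_iff sum.distrib algebra_simps)
lemma mm_add_r: "mm K Z (X + Y) = mm K Z X + mm K Z Y"
  unfolding mm_def by (auto simp: fun_eq_iff sum.distrib algebra_simps)
lemma mm_diff_l: "mm K (X - Y) Z = mm K X Z - mm K Y Z"
  unfolding mm_def by (auto simp: fun_eq_iff sum_subtractf algebra_simps)
lemma mm_diff_r: "mm K Z (X - Y) = mm K Z X - mm K Z Y"
  unfolding mm_def by (auto simp: fun_eq_iff sum_subtractf algebra_simps)
lemma mm_neg_l: "mm K (- X) Z = - mm K X Z"
  unfolding mm_def by (auto simp: fun_eq_iff sum_negf)
lemma mm_neg_r: "mm K Z (- X) = - mm K Z X"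
  unfolding mm_def by (auto simp: fun_eq_iff sum_negf)

lemma tr_mm: "tr (mm K X Y) = mm K (tr Y) (tr X)"
  unfolding mm_def tr_def by (auto simp: fun_eq_iff algebra_simps)
lemma tr_tr[simp]: "tr (tr X) = X" by (simp add: tr_def)
lemma tr_add: "tr (X + Y) = tr X + tr Y" by (simp add: tr_def fun_eq_iff)
lemma tr_diff: "tr (X - Y) = tr X - tr Y" by (simp add: tr_def fun_eq_iff)
lemma tr_neg: "tr (- X) = - tr X" by (simp add: tr_def fun_eq_iff)
lemma tr_idm: "tr (idm K) = idm K" by (auto simp: tr_def idm_def fun_eq_iff)

lemma zo_cut: "zo K (cut K X)" by (simp add: zo_def cut_def)
lemma zo_tr: "zo K X \<Longrightarrow> zo K (tr X)" by (auto simp: zo_def tr_def)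

lemma mm_idm_l: "zo K X \<Longrightarrow> mm K (idm K) X = X"
proof -
  assume z: "zo K X"
  have "mm K (idm K) X A C = X A C" for A C
  proof -
    have "mm K (idm K) X A C = (\<Sum>B<K. if B = A then (if A < K then X A C else 0) else 0)"
      unfolding mm_def idm_def by (rule sum.cong) auto
    also have "\<dots> = X A C" using z by (auto simp: zo_def)
    finally show ?thesis .
  qed
  then show ?thesis by auto
qed
lemma mm_idm_r: "zo K X \<Longrightarrow> mm K X (idm K) = X"
proof -
  assume z: "zo K X"
  have "mm K X (idm K) A C = X A C" for A C
  proof -
    have "mm K X (idm K) A C = (\<Sum>B<K. if B = C then (if C < K then X A C else 0) else 0)"
      unfolding mm_def idm_def by (rule sum.cong) auto
    also have "\<dots> = X A C" using z by (auto simp: zo_def)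
    finally show ?thesis .
  qed
  then show ?thesis by auto
qed

lemma mm_cut_l: "mm K (cut K X) Y A C = (if A < K then mm K X Y A C else 0)"
  unfolding mm_def cut_def by auto
lemma mm_cut_r: "mm K X (cut K Y) A C = (if C < K then mm K X Y A C else 0)"
  unfolding mm_def cut_def by auto

lemma minv_props:
  fixes h :: matr
  assumes nd: "\<forall>v::nat \<Rightarrow> real. (\<forall>B<K. (\<Sum>A<K. v A * h A B) = 0) \<longrightarrow> (\<forall>A<K. v A = 0)"
  shows "(\<forall>A<K. \<forall>C<K. (\<Sum>B<K. minv K h A B * h B C) = (if A = C then 1 else 0)) \<and>
         (\<forall>A<K. \<forall>C<K. (\<Sum>B<K. h A B * minv K h B C) = (if A = C then 1 else 0)) \<and>
         (\<forall>A B. A \<ge> K \<or> B \<ge> K \<longrightarrow> minv K h A B = 0)"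
proof -
  let ?P = "\<lambda>g. (\<forall>A<K. \<forall>C<K. (\<Sum>B<K. g A B * h B C) = (if A = C then 1 else 0)) \<and>
                      (\<forall>A<K. \<forall>C<K. (\<Sum>B<K. h A B * g B C) = (if A = C then 1 else 0)) \<and>
                      (\<forall>A B. A \<ge> K \<or> B \<ge> K \<longrightarrow> g A B = 0)"
  define M where "M = Matrix.mat K K (\<lambda>(i,j). h i j)"
  define Mt where "Mt = Matrix.mat K K (\<lambda>(i,j). h j i)"
  have Mc: "M \<in> carrier_mat K K" and Mtc: "Mt \<in> carrier_mat K K" by (auto simp: M_def Mt_def)
  have "det Mt \<noteq> 0"
  proof
    assume "det Mt = 0"
    then obtain v where v: "v \<in> carrier_vec K" "v \<noteq> 0\<^sub>v K" "Mt *\<^sub>v v = 0\<^sub>v K"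
      using det_0_iff_vec_prod_zero_field[OF Mtc] by auto
    define w where "w = (\<lambda>i. if i < K then v $ i else 0)"
    have "\<forall>B<K. (\<Sum>A<K. w A * h A B) = 0"
    proof (intro allI impI)
      fix B assume B: "B < K"
      have "(Mt *\<^sub>v v) $ B = 0" using v(3) B by simp
      then have "(\<Sum>A\<in>{0..<K}. h A B * v $ A) = 0"
        using B v(1) by (simp add: Mt_def scalar_prod_def row_def)
      then show "(\<Sum>A<K. w A * h A B) = 0"
        by (simp add: w_def atLeast0LessThan mult.commute)
    qed
    then have "\<forall>A<K. w A = 0" using nd by blast
    then have "v = 0\<^sub>v K" using v(1) by (auto simp: w_def)
    with v(2) show False by simp
  qed
  moreover have "M = transpose_mat Mt" by (rule eq_matI) (auto simp: M_def Mt_def)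
  ultimately have "det M \<noteq> 0" using det_transpose[OF Mtc] by simp
  then have "M \<in> Units (ring_mat TYPE(real) K undefined)" by (rule det_non_zero_imp_unit[OF Mc])
  then obtain N where N: "N \<in> carrier_mat K K" "N * M = 1\<^sub>m K" "M * N = 1\<^sub>m K"
    by (auto simp: Units_def ring_mat_def)
  define g where "g = (\<lambda>A B. if A < K \<and> B < K then N $$ (A, B) else 0)"
  have Pg: "?P g"
  proof (intro conjI allI impI)
    fix A C assume AC: "A < K" "C < K"
    have "(N * M) $$ (A, C) = (if A = C then 1 else 0)" using N(2) AC by simp
    then show "(\<Sum>B<K. g A B * h B C) = (if A = C then 1 else 0)"
      using AC N(1) by (simp add: g_def M_def scalar_prod_def atLeast0LessThan row_def col_def)
  next
    fix A C assume AC: "A < K" "C < K"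
    have "(M * N) $$ (A, C) = (if A = C then 1 else 0)" using N(3) AC by simp
    then show "(\<Sum>B<K. h A B * g B C) = (if A = C then 1 else 0)"
      using AC N(1) by (simp add: g_def M_def scalar_prod_def atLeast0LessThan row_def col_def)
  next
    fix A B assume "K \<le> A \<or> K \<le> B" then show "g A B = 0" by (auto simp: g_def)
  qed
  have uniq: "g' = g" if "?P g'" for g'
  proof -
    have z: "zo K g" "zo K g'" using Pg that by (auto simp: zo_def)
    have e1: "mm K g' (cut K h) = idm K"
    proof (intro ext)
      fix A C show "mm K g' (cut K h) A C = idm K A C"
      proof (cases "A < K \<and> C < K")
        case True
        then have "mm K g' (cut K h) A C = (\<Sum>B<K. g' A B * h B C)" by (simp add: mm_def cut_def)
        then show ?thesis using that True by (simp add: idm_def)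
      next
        case False
        then have "\<forall>B<K. g' A B * cut K h B C = 0" using that by (auto simp: cut_def)
        then have "mm K g' (cut K h) A C = 0" unfolding mm_def by (intro sum.neutral) auto
        then show ?thesis using False by (auto simp: idm_def)
      qed
    qed
    have e2: "mm K (cut K h) g = idm K"
    proof (intro ext)
      fix A C show "mm K (cut K h) g A C = idm K A C"
      proof (cases "A < K \<and> C < K")
        case True
        then have "mm K (cut K h) g A C = (\<Sum>B<K. h A B * g B C)" by (simp add: mm_def cut_def)
        then show ?thesis using Pg True by (simp add: idm_def)
      next
        case False
        then have "\<forall>B<K. cut K h A B * g B C = 0" using Pg by (auto simp: cut_def)
        then have "mm K (cut K h) g A C = 0" unfolding mm_def by (intro sum.neutral) auto
        then show ?thesis using False by (auto simp: idm_def)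
      qed
    qed
    have "g' = mm K g' (mm K (cut K h) g)" using e2 mm_idm_r[OF z(2)] by simp
    also have "\<dots> = g" using e1 mm_idm_l[OF z(1)] by (simp add: mm_assoc[symmetric])
    finally show ?thesis .
  qed
  have "?P (minv K h)" unfolding minv_def
    by (rule theI[of ?P g, OF Pg uniq])
  then show ?thesis .
qed


lemma mult_if_delta[simp]: "(if P then 1 else 0) * (y::real) = (if P then y else 0)" by simp
lemma pb_apply[simp]: "pb s (q', p) = s q'" by (simp add: pb_def)
lemma qfun_apply[simp]: "qfun i (q', p) = escal (q' $ i)" by (simp add: qfun_def)
lemma wedge_neg_right: "(a \<and>\<^sub>e (\<lambda>T. - b T)) S = - (a \<and>\<^sub>e b) S"
  unfolding wedge_def by (simp add: sum_negf)
lemma wedge_neg_left: "((\<lambda>T. - a T) \<and>\<^sub>e b) S = - (a \<and>\<^sub>e b) S"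
  unfolding wedge_def by (simp add: sum_negf)

lemma axis_comp: "(p + t *\<^sub>R axis k (1::real)) $ j = p $ j + t * (if j = k then 1 else 0)"
  by (simp add: axis_def)

lemma deriv_lin: "deriv (\<lambda>t::real. a + t * b - c) 0 = b"
  by (rule DERIV_imp_deriv) (auto intro!: derivative_eq_intros)

lemma sum_delta_UNIV: "(\<Sum>k\<in>(UNIV::'n::finite set). (if j = k then 1 else 0) * f k) = (f j :: real)"
  by simp
lemma sum_delta_UNIV': "(\<Sum>k\<in>(UNIV::'n::finite set). (if k = j then 1 else 0) * f k) = (f j :: real)"
  by simp

lemma sum_rot3: "(\<Sum>A\<in>I. \<Sum>B\<in>J. \<Sum>C\<in>L. (F A B C :: real)) = (\<Sum>B\<in>J. \<Sum>C\<in>L. \<Sum>A\<in>I. F A B C)"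
  by (subst sum.swap) (rule sum.cong[OF refl], rule sum.swap)

definition R2 :: "nat \<Rightarrow> ((real^'n::finite) \<Rightarrow> nat \<Rightarrow> nat \<Rightarrow> real) \<Rightarrow> ((real^'n::finite) \<Rightarrow> 'n \<Rightarrow> nat \<Rightarrow> nat \<Rightarrow> real) \<Rightarrow> (real^'n) \<Rightarrow> 'n \<Rightarrow> matr" where
  "R2 K h Gam q' i = (\<lambda>B C. \<Sum>A<K. minv K (h q') A B * Gam q' i A C)"

lemma rfun_eq: "rfun K h Gam i (q', p) = (\<lambda>S. escal (p $ i) S - 1/2 * form2 K (R2 K h Gam q' i) S)"
proof (rule ext)
  fix S
  have "(\<Sum>A<K. \<Sum>B<K. \<Sum>C<K. minv K (h q') A B * Gam q' i A C * w2 B C S)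
      = (\<Sum>B<K. \<Sum>C<K. R2 K h Gam q' i B C * w2 B C S)"
    unfolding R2_def sum_distrib_right by (rule sum_rot3)
  then show "rfun K h Gam i (q', p) S = escal (p $ i) S - 1/2 * form2 K (R2 K h Gam q' i) S"
    by (simp add: rfun_def pfun_def pb_def esum_def form2_def)
qed

lemma dp_rfun: "dp (rfun K h Gam j) k (q', p) = escal (if j = k then 1 else 0)"
proof (rule ext)
  fix S
  show "dp (rfun K h Gam j) k (q', p) S = escal (if j = k then 1 else 0) S"
    unfolding dp_def rfun_eq by (simp add: escal_def axis_comp deriv_lin axis_def)
qed

lemma dp_qfun: "dp (qfun i) k x = (\<lambda>_. 0)"
  by (cases x) (simp add: dp_def qfun_def fun_eq_iff)
lemma dp_pb: "dp (pb s) k x = (\<lambda>_. 0)"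
  by (cases x) (simp add: dp_def pb_def fun_eq_iff)
lemma dq_pb_const: "dq (pb (\<lambda>_. c)) k x = (\<lambda>_. 0)"
  by (cases x) (simp add: dq_def pb_def fun_eq_iff)
lemma dq_qfun: "dq (qfun i) k (q', p) = escal (if i = k then 1 else 0)"
proof (rule ext)
  fix S
  have d: "deriv (\<lambda>t::real. a + t * b) 0 = b" for a b :: real
    by (rule DERIV_imp_deriv) (auto intro!: derivative_eq_intros)
  show "dq (qfun i) k (q', p) S = escal (if i = k then 1 else 0) S"
    unfolding dq_def qfun_def by (simp add: escal_def axis_comp d axis_def)
qed

lemma conn_der_escal: "conn_der K Gam q' k (escal c) = (\<lambda>_. 0)"
  by (simp add: conn_der_def eint_escal fun_eq_iff)

lemma conn_der_form1: "conn_der K Gam q' k (form1 K v) = form1 K (\<lambda>B. \<Sum>A<K. v A * Gam q' k A B)"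
proof (rule ext)
  fix S
  have "conn_der K Gam q' k (form1 K v) S = (\<Sum>A<K. \<Sum>B<K. Gam q' k A B * (v A * ebasis B S))"
    unfolding conn_der_def
    by (intro sum.cong refl) (simp add: eint_form1 wedge_ebasis_escal)
  also have "\<dots> = form1 K (\<lambda>B. \<Sum>A<K. v A * Gam q' k A B) S"
    unfolding form1_def sum_distrib_right by (subst sum.swap) (simp add: algebra_simps)
  finally show "conn_der K Gam q' k (form1 K v) S = form1 K (\<lambda>B. \<Sum>A<K. v A * Gam q' k A B) S" .
qed

lemma form1_ebasis: "A < K \<Longrightarrow> form1 K (\<lambda>B. if B = A then 1 else 0) = ebasis A"
  by (auto simp: form1_def fun_eq_iff)

lemma conn_der_ebasis: "A < K \<Longrightarrow> conn_der K Gam q' k (ebasis A) = form1 K (\<lambda>B. Gam q' k A B)"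
  using conn_der_form1[of K Gam q' k "\<lambda>B. if B = A then 1 else 0"]
  by (simp add: form1_ebasis)

lemma form1_single: "form1 K v {C} = (if C < K then v C else 0)"
  by (auto simp: form1_def ebasis_def if_distrib cong: if_cong)

lemma eint_rval: "A < K \<Longrightarrow> eint A (\<lambda>S. escal c S - d * form2 K X S) = (\<lambda>S. - d * form1 K (\<lambda>C. X A C - X C A) S)"
  by (simp add: eint_diff eint_scale eint_escal eint_form2)

lemma ejnt_rval: "A < K \<Longrightarrow> ejnt A (\<lambda>S. escal c S - d * form2 K X S) = (\<lambda>S. d * form1 K (\<lambda>C. X A C - X C A) S)"
proof -
  assume A: "A < K"
  have "(-1) ^ card S * (- d * form1 K (\<lambda>C. X A C - X C A) S) = d * form1 K (\<lambda>C. X A C - X C A) S" for S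
    using form1_card[of S K "\<lambda>C. X A C - X C A"] by (simp add: algebra_simps)
  then show ?thesis unfolding ejnt_def eint_rval[OF A] by simp
qed

lemma sum3_form2: "(\<Sum>A<K. \<Sum>B<K. f A B * (\<Sum>C<K. v A C * w2 B C S)) = form2 K (\<lambda>B C. \<Sum>A<K. f A B * v A C) S"
proof -
  have "(\<Sum>A<K. \<Sum>B<K. f A B * (\<Sum>C<K. v A C * w2 B C S)) = (\<Sum>A<K. \<Sum>B<K. \<Sum>C<K. f A B * v A C * w2 B C S)"
    by (simp add: sum_distrib_left mult.assoc)
  also have "\<dots> = (\<Sum>B<K. \<Sum>C<K. \<Sum>A<K. f A B * v A C * w2 B C S)" by (rule sum_rot3)
  also have "\<dots> = form2 K (\<lambda>B C. \<Sum>A<K. f A B * v A C) S"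
    unfolding form2_def by (simp add: sum_distrib_right)
  finally show ?thesis .
qed

lemma conn_der_rval: "conn_der K Gam q' k (\<lambda>S. escal c S - d * form2 K X S) S =
   - d * form2 K (\<lambda>B C. \<Sum>A<K. Gam q' k A B * (X A C - X C A)) S"
proof -
  have "conn_der K Gam q' k (\<lambda>S. escal c S - d * form2 K X S) S =
     (\<Sum>A<K. \<Sum>B<K. Gam q' k A B * (- d * (\<Sum>C<K. (X A C - X C A) * w2 B C S)))"
    unfolding conn_der_def
    by (intro sum.cong refl) (simp add: eint_rval wedge_scale_right wedge_neg_right wedge_ebasis_form1)
  also have "\<dots> = - d * (\<Sum>A<K. \<Sum>B<K. Gam q' k A B * (\<Sum>C<K. (X A C - X C A) * w2 B C S))"
    by (simp add: sum_distrib_left algebra_simps)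
  also have "\<dots> = - d * form2 K (\<lambda>B C. \<Sum>A<K. Gam q' k A B * (X A C - X C A)) S"
    by (simp add: sum3_form2)
  finally show ?thesis .
qed

lemma nablaq_pb_ebasis: "A < K \<Longrightarrow> nablaq K Gam (pb (\<lambda>_. ebasis A)) j = (\<lambda>(q', p'). form1 K (\<lambda>B. Gam q' j A B))"
  by (auto simp: fun_eq_iff nablaq_def dq_pb_const conn_der_ebasis)

lemma nablaq_qfun: "nablaq K Gam (qfun i) k (q', p) = escal (if i = k then 1 else 0)"
  by (simp add: nablaq_def dq_qfun conn_der_escal fun_eq_iff)

lemma rothstein_inf: "infinite S \<Longrightarrow> rothstein K h Gam \<phi> \<psi> x S = 0"
  by (cases x) (simp add: rothstein_def esum_def wedge_inf)

lemma minv_cong: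
  assumes "\<And>A B. A < K \<Longrightarrow> B < K \<Longrightarrow> h1 A B = h2 A B"
  shows "minv K h1 = minv K h2"
proof -
  have s1: "(\<Sum>B<K. g A B * h1 B C) = (\<Sum>B<K. g A B * h2 B C)" if "C < K" for g :: matr and A C
    using assms that by (intro sum.cong) auto
  have s2: "(\<Sum>B<K. h1 A B * g B C) = (\<Sum>B<K. h2 A B * g B C)" if "A < K" for g :: matr and A C
    using assms that by (intro sum.cong) auto
  show ?thesis unfolding minv_def
    by (rule arg_cong[where f = The]) (simp add: fun_eq_iff s1 s2 cong: conj_cong imp_cong)
qed


locale setting =
  fixes U :: "(real^'n::finite) set" and K :: nat
    and h :: "(real^'n::finite) \<Rightarrow> nat \<Rightarrow> nat \<Rightarrow> real"
    and Gam :: "(real^'n::finite) \<Rightarrow> 'n \<Rightarrow> nat \<Rightarrow> nat \<Rightarrow> real"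
    and q :: "real^'n"
  assumes oU: "open U" and fm: "fiber_metric U K h" and mc: "metric_connection U K h Gam"
    and const: "\<forall>A<K. \<forall>B<K. \<exists>c. \<forall>q\<in>U. h q A B = c" and qU: "q \<in> U"
begin

lemma ev_U: "\<forall>\<^sub>F t in nhds 0. q + t *\<^sub>R axis k 1 \<in> U"
proof -
  let ?f = "\<lambda>t::real. q + t *\<^sub>R axis k 1"
  have "open (?f -` U)"
    by (rule continuous_open_vimage[OF oU]) (intro continuous_intros)
  moreover have "0 \<in> ?f -` U" using qU by simp
  ultimately show ?thesis unfolding eventually_nhds by blast
qed

lemma h_loc: "q' \<in> U \<Longrightarrow> A < K \<Longrightarrow> B < K \<Longrightarrow> h q' A B = h q A B"
  using const qU by metis

lemma minv_loc: "q' \<in> U \<Longrightarrow> minv K (h q') = minv K (h q)"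
  by (rule minv_cong) (simp add: h_loc)

lemma hsym: "A < K \<Longrightarrow> B < K \<Longrightarrow> h q A B = h q B A"
  using fm qU unfolding fiber_metric_def by blast

lemma hnd: "\<forall>v::nat \<Rightarrow> real. (\<forall>B<K. (\<Sum>A<K. v A * h q A B) = 0) \<longrightarrow> (\<forall>A<K. v A = 0)"
  using fm qU unfolding fiber_metric_def by blast

definition "gq = minv K (h q)"
definition "Hq = cut K (h q)"
definition "Gm i = cut K (\<lambda>A C. Gam q i A C)"
definition "Dd k i A C = deriv (\<lambda>t. Gam (q + t *\<^sub>R axis k 1) i A C) 0"
definition "Dm k i = cut K (Dd k i)"
definition "Mm i = mm K gq (Gm i)"

lemma ginv: "(\<forall>A<K. \<forall>C<K. (\<Sum>B<K. gq A B * h q B C) = (if A = C then 1 else 0)) \<and>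
         (\<forall>A<K. \<forall>C<K. (\<Sum>B<K. h q A B * gq B C) = (if A = C then 1 else 0)) \<and>
         (\<forall>A B. A \<ge> K \<or> B \<ge> K \<longrightarrow> gq A B = 0)"
  unfolding gq_def by (rule minv_props[OF hnd])

lemma zo_g: "zo K gq" using ginv by (auto simp: zo_def)

lemma ginv1: "mm K gq Hq = idm K"
proof (intro ext)
  fix A C show "mm K gq Hq A C = idm K A C"
  proof (cases "A < K \<and> C < K")
    case True
    then have "mm K gq Hq A C = (\<Sum>B<K. gq A B * h q B C)" by (simp add: mm_def Hq_def cut_def)
    then show ?thesis using ginv True by (simp add: idm_def)
  next
    case False
    then have "\<forall>B<K. gq A B * Hq B C = 0" using ginv by (auto simp: Hq_def cut_def)
    then have "mm K gq Hq A C = 0" unfolding mm_def by (intro sum.neutral) auto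
    then show ?thesis using False by (auto simp: idm_def)
  qed
qed

lemma ginv2: "mm K Hq gq = idm K"
proof (intro ext)
  fix A C show "mm K Hq gq A C = idm K A C"
  proof (cases "A < K \<and> C < K")
    case True
    then have "mm K Hq gq A C = (\<Sum>B<K. h q A B * gq B C)" by (simp add: mm_def Hq_def cut_def)
    then show ?thesis using ginv True by (simp add: idm_def)
  next
    case False
    then have "\<forall>B<K. Hq A B * gq B C = 0" using ginv by (auto simp: Hq_def cut_def)
    then have "mm K Hq gq A C = 0" unfolding mm_def by (intro sum.neutral) auto
    then show ?thesis using False by (auto simp: idm_def)
  qed
qed

lemma trH: "tr Hq = Hq"
  by (auto simp: tr_def Hq_def cut_def fun_eq_iff hsym)

lemma trg: "tr gq = gq"
proof -
  have "tr gq = mm K (tr gq) (idm K)" using mm_idm_r[OF zo_tr[OF zo_g]] by simp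
  also have "\<dots> = mm K (tr gq) (mm K Hq gq)" by (simp add: ginv2)
  also have "\<dots> = mm K (mm K (tr gq) Hq) gq" by (simp add: mm_assoc)
  also have "mm K (tr gq) Hq = tr (mm K Hq gq)" by (simp add: tr_mm trH)
  also have "\<dots> = idm K" by (simp add: ginv2 tr_idm)
  finally show ?thesis using mm_idm_l[OF zo_g] by simp
qed

lemma gsym: "gq A B = gq B A"
  using trg by (metis tr_def)

lemma metric_rel: "A < K \<Longrightarrow> B < K \<Longrightarrow> (\<Sum>C<K. Gam q i A C * h q C B + Gam q i B C * h q A C) = 0"
proof -
  assume AB: "A < K" "B < K"
  have d: "((\<lambda>t. h (q + t *\<^sub>R axis i 1) A B) has_real_derivative
          (\<Sum>C<K. Gam q i A C * h q C B + Gam q i B C * h q A C)) (at 0)"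
    using mc qU AB unfolding metric_connection_def by blast
  have ev: "\<forall>\<^sub>F t in nhds 0. h (q + t *\<^sub>R axis i 1) A B = h q A B"
    using ev_U[of i] by eventually_elim (simp add: h_loc AB)
  have "((\<lambda>t. h q A B) has_real_derivative (\<Sum>C<K. Gam q i A C * h q C B + Gam q i B C * h q A C)) (at 0)"
    using DERIV_cong_ev[OF refl ev refl] d by simp
  then show ?thesis using DERIV_const DERIV_unique by blast
qed

lemma metric_mat: "mm K (Gm i) Hq = - mm K Hq (tr (Gm i))"
proof (intro ext)
  fix A B
  show "mm K (Gm i) Hq A B = (- mm K Hq (tr (Gm i))) A B"
  proof (cases "A < K \<and> B < K")
    case True
    have "mm K (Gm i) Hq A B = (\<Sum>C<K. Gam q i A C * h q C B)"
      using True by (simp add: mm_def Gm_def Hq_def cut_def)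
    moreover have "mm K Hq (tr (Gm i)) A B = (\<Sum>C<K. Gam q i B C * h q A C)"
      using True by (auto simp: mm_def Gm_def Hq_def cut_def tr_def mult.commute intro!: sum.cong)
    ultimately show ?thesis using metric_rel[of A B i] True by (simp add: sum.distrib eq_neg_iff_add_eq_0)
  next
    case False
    then show ?thesis by (auto simp: mm_def Gm_def Hq_def cut_def tr_def)
  qed
qed

lemma zo_Gm: "zo K (Gm i)" by (simp add: Gm_def zo_cut)

lemma trM: "tr (Mm i) = - Mm i"
proof -
  have a: "tr (Gm i) = - mm K gq (mm K (Gm i) Hq)"
  proof -
    have "tr (Gm i) = mm K (idm K) (tr (Gm i))" using mm_idm_l[OF zo_tr[OF zo_Gm]] by simp
    also have "\<dots> = mm K gq (mm K Hq (tr (Gm i)))" by (simp add: ginv1[symmetric] mm_assoc)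
    also have "\<dots> = - mm K gq (mm K (Gm i) Hq)" by (simp add: metric_mat mm_neg_r)
    finally show ?thesis .
  qed
  have "tr (Mm i) = mm K (tr (Gm i)) gq" by (simp add: Mm_def tr_mm trg)
  also have "\<dots> = - mm K gq (mm K (Gm i) (mm K Hq gq))" by (simp add: a mm_neg_l mm_assoc)
  also have "\<dots> = - Mm i" by (simp add: ginv2 mm_idm_r[OF zo_Gm] Mm_def)
  finally show ?thesis .
qed

definition "Y a b = mm K gq (mm K (Gm a) (Gm b))"

lemma L1: "mm K (tr (Gm j)) (Mm i) = - Y j i"
proof -
  have a: "mm K (tr (Gm j)) gq = tr (Mm j)" by (simp add: Mm_def tr_mm trg)
  have "mm K (tr (Gm j)) (Mm i) = mm K (mm K (tr (Gm j)) gq) (Gm i)" by (simp add: Mm_def mm_assoc)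
  also have "\<dots> = mm K (tr (Mm j)) (Gm i)" by (simp only: a)
  also have "\<dots> = - Y j i" by (simp only: trM) (simp add: mm_neg_l Y_def Mm_def mm_assoc)
  finally show ?thesis .
qed


lemma L3: "tr (Y j i) = Y i j"
proof -
  have "tr (Y j i) = mm K (tr (Gm i)) (mm K (tr (Gm j)) gq)" by (simp add: Y_def tr_mm trg mm_assoc)
  also have "mm K (tr (Gm j)) gq = tr (Mm j)" by (simp add: Mm_def tr_mm trg)
  also have "mm K (tr (Gm i)) (tr (Mm j)) = Y i j" by (simp add: trM mm_neg_r L1)
  finally show ?thesis .
qed

lemma L4: "mm K Hq (Mm i) = Gm i"
proof -
  have "mm K Hq (Mm i) = mm K (mm K Hq gq) (Gm i)" by (simp add: Mm_def mm_assoc)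
  then show ?thesis by (simp add: ginv2 mm_idm_l[OF zo_Gm])
qed

lemma L2: "mm K (Mm i) (mm K Hq (Mm j)) = Y i j"
  by (simp add: L4) (simp add: Mm_def Y_def mm_assoc)

end


lemma form2_sum: "(\<Sum>A\<in>I. form2 K (X A) S) = form2 K (\<lambda>B C. \<Sum>A\<in>I. X A B C) S"
  unfolding form2_def sum_distrib_right by (rule sum_rot3)

lemma form2_neg: "- form2 K X S = form2 K (\<lambda>B C. - X B C) S"
  unfolding form2_def by (simp add: sum_negf)

lemma mult_if_right: "(c::real) * (if P then x else 0) = (if P then c * x else 0)" by simp

lemma form1_sum: "(\<Sum>A\<in>I. form1 K (X A) S) = form1 K (\<lambda>B. \<Sum>A\<in>I. X A B) S"
  unfolding form1_def sum_distrib_right by (rule sum.swap)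

lemma comb4: "a * form2 K X1 S + b * form2 K X2 S + c * form2 K X3 S + d * form2 K X4 S
   = form2 K (\<lambda>B C. a * X1 B C + b * X2 B C + c * X3 B C + d * X4 B C) S"
  by (simp add: form2_def sum.distrib sum_distrib_left algebra_simps)

context setting
begin

lemma Gam_deriv:
  assumes "A < K" "C < K"
  shows "((\<lambda>t. Gam (q + t *\<^sub>R axis k 1) i A C) has_real_derivative Dd k i A C) (at 0)"
proof -
  have "smooth_on U (\<lambda>q. Gam q i A C)" using mc assms unfolding metric_connection_def by blast
  then have "(\<lambda>t. iter_pdiff [] (\<lambda>q. Gam q i A C) (q + t *\<^sub>R axis k 1)) differentiable (at 0)"
    using qU unfolding smooth_on_def by blast
  then have "(\<lambda>t. Gam (q + t *\<^sub>R axis k 1) i A C) differentiable (at 0)" by (simp add: iter_pdiff_def)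
  then show ?thesis unfolding Dd_def using DERIV_deriv_iff_real_differentiable by blast
qed

lemma dq_rfun: "dq (rfun K h Gam i) j (q, p) S = - (1/2 * form2 K (\<lambda>B C. \<Sum>A<K. gq A B * Dd j i A C) S)"
proof -
  let ?F = "\<lambda>t. escal (p $ i) S - 1/2 * (\<Sum>B<K. \<Sum>C<K. (\<Sum>A<K. gq A B * Gam (q + t *\<^sub>R axis j 1) i A C) * w2 B C S)"
  have ev: "\<forall>\<^sub>F t in nhds 0. rfun K h Gam i (q + t *\<^sub>R axis j 1, p) S = ?F t"
    using ev_U[of j] by eventually_elim (simp add: rfun_eq form2_def R2_def minv_loc gq_def)
  have d: "(?F has_real_derivative (0 - 1/2 * (\<Sum>B<K. \<Sum>C<K. (\<Sum>A<K. gq A B * Dd j i A C) * w2 B C S))) (at 0)"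
    by (intro DERIV_diff DERIV_const DERIV_cmult DERIV_sum DERIV_cmult_right Gam_deriv) auto
  have "((\<lambda>t. rfun K h Gam i (q + t *\<^sub>R axis j 1, p) S) has_real_derivative
           (0 - 1/2 * (\<Sum>B<K. \<Sum>C<K. (\<Sum>A<K. gq A B * Dd j i A C) * w2 B C S))) (at 0)"
    using DERIV_cong_ev[OF refl ev refl] d by simp
  then show ?thesis unfolding dq_def by (simp add: DERIV_imp_deriv form2_def)
qed

lemma R2_M: "B < K \<Longrightarrow> C < K \<Longrightarrow> R2 K h Gam q i B C = Mm i B C"
  unfolding R2_def Mm_def mm_def Gm_def cut_def gq_def[symmetric]
  by (auto simp: gsym intro!: sum.cong)

definition "P1 i j = mm K gq (Dm j i) + mm K (tr (Gm j)) (Mm i - tr (Mm i))"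

lemma nablaq_rfun: "nablaq K Gam (rfun K h Gam i) j (q, p) S = - (1/2 * form2 K (P1 i j) S)"
proof -
  have a: "nablaq K Gam (rfun K h Gam i) j (q, p) S =
     - (1/2 * form2 K (\<lambda>B C. \<Sum>A<K. gq A B * Dd j i A C) S)
     - (1/2 * form2 K (\<lambda>B C. \<Sum>A<K. Gam q j A B * (R2 K h Gam q i A C - R2 K h Gam q i C A)) S)"
  proof -
    have c: "conn_der K Gam q j (rfun K h Gam i (q,p)) S =
       - (1/2 * form2 K (\<lambda>B C. \<Sum>A<K. Gam q j A B * (R2 K h Gam q i A C - R2 K h Gam q i C A)) S)"
      unfolding rfun_eq conn_der_rval by simp
    show ?thesis unfolding nablaq_def by (simp add: dq_rfun c)
  qed
  have b: "form2 K (P1 i j) S = form2 K (\<lambda>B C. \<Sum>A<K. gq A B * Dd j i A C) S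
     + form2 K (\<lambda>B C. \<Sum>A<K. Gam q j A B * (R2 K h Gam q i A C - R2 K h Gam q i C A)) S"
    unfolding form2_add
  proof (rule fun_cong[OF form2_cong])
    fix B C assume BC: "B < K" "C < K"
    have 1: "mm K gq (Dm j i) B C = (\<Sum>A<K. gq A B * Dd j i A C)"
      using BC by (auto simp: mm_def Dm_def cut_def gsym intro!: sum.cong)
    have 2: "mm K (tr (Gm j)) (Mm i - tr (Mm i)) B C = (\<Sum>A<K. Gam q j A B * (R2 K h Gam q i A C - R2 K h Gam q i C A))"
      using BC by (auto simp: mm_def Gm_def cut_def tr_def R2_M intro!: sum.cong)
    show "P1 i j B C = (\<Sum>A<K. gq A B * Dd j i A C) + (\<Sum>A<K. Gam q j A B * (R2 K h Gam q i A C - R2 K h Gam q i C A))"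
      unfolding P1_def using 1 2 by simp
  qed
  show ?thesis using a b by (simp add: algebra_simps)
qed

lemma curv_val:
  assumes "A < K" "C < K"
  shows "curv K Gam q C A i j = Dd i j A C + mm K (Gm j) (Gm i) A C - Dd j i A C - mm K (Gm i) (Gm j) A C"
proof -
  have n: "nablaq K Gam (nablaq K Gam (pb (\<lambda>_. ebasis A)) j) i (q, 0) {C} = Dd i j A C + mm K (Gm j) (Gm i) A C"
    for i j
  proof -
    have "dq (\<lambda>(q', p'). form1 K (\<lambda>B. Gam q' j A B)) i (q, 0) {C} = Dd i j A C"
      using assms by (simp add: dq_def form1_single Dd_def)
    moreover have "conn_der K Gam q i (form1 K (\<lambda>B. Gam q j A B)) {C} = mm K (Gm j) (Gm i) A C"
      using assms by (simp add: conn_der_form1 form1_single mm_def Gm_def cut_def)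
    ultimately show ?thesis
      unfolding nablaq_pb_ebasis[OF assms(1)] by (simp add: nablaq_def)
  qed
  show ?thesis unfolding curv_def n by simp
qed

definition "Nm i = Mm i - tr (Mm i)"
definition "P3 i j = mm K gq (Dm i j - Dm j i + mm K (Gm j) (Gm i) - mm K (Gm i) (Gm j))"
definition "P4 i j = mm K (tr (Nm i)) (mm K Hq (Nm j))"

lemma Nm_eq: "Nm i = Mm i + Mm i" by (simp add: Nm_def trM)
lemma trN: "tr (Nm i) = - (Mm i + Mm i)"
  by (simp only: Nm_def tr_diff tr_neg trM) (simp add: algebra_simps)

lemma ejnt_r: "A < K \<Longrightarrow> ejnt A (rfun K h Gam i (q, p)) = (\<lambda>S. 1/2 * form1 K (Nm i A) S)"
proof -
  assume A: "A < K"
  have f: "form1 K (\<lambda>C. R2 K h Gam q i A C - R2 K h Gam q i C A) = form1 K (Nm i A)"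
    by (rule form1_cong) (simp add: R2_M A Nm_def tr_def)
  show ?thesis unfolding rfun_eq ejnt_rval[OF A] f ..
qed

lemma eint_r: "A < K \<Longrightarrow> eint A (rfun K h Gam i (q, p)) = (\<lambda>S. - (1/2) * form1 K (Nm i A) S)"
proof -
  assume A: "A < K"
  have f: "form1 K (\<lambda>C. R2 K h Gam q i A C - R2 K h Gam q i C A) = form1 K (Nm i A)"
    by (rule form1_cong) (simp add: R2_M A Nm_def tr_def)
  show ?thesis unfolding rfun_eq eint_rval[OF A] f ..
qed

lemma T4: "(\<Sum>A<K. \<Sum>B<K. h q A B * (ejnt A (rfun K h Gam i (q, p)) \<and>\<^sub>e eint B (rfun K h Gam j (q, p))) S)
   = - (1/4) * form2 K (P4 i j) S"
proof -
  let ?X = "\<lambda>A B. (\<lambda>B' C'. Nm i A B' * Nm j B C')"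
  have w: "(ejnt A (rfun K h Gam i (q, p)) \<and>\<^sub>e eint B (rfun K h Gam j (q, p))) S = - (1/4) * form2 K (?X A B) S"
    if "A < K" "B < K" for A B
  proof -
    have "(ejnt A (rfun K h Gam i (q, p)) \<and>\<^sub>e eint B (rfun K h Gam j (q, p))) S = 1/2 * (- (1/2) * form2 K (?X A B) S)"
      by (simp only: ejnt_r[OF that(1)] eint_r[OF that(2)] wedge_scale_left wedge_scale_right wedge_form1_form1)
    then show ?thesis by simp
  qed
  have "(\<Sum>A<K. \<Sum>B<K. h q A B * (ejnt A (rfun K h Gam i (q, p)) \<and>\<^sub>e eint B (rfun K h Gam j (q, p))) S)
     = - (1/4) * (\<Sum>A<K. \<Sum>B<K. h q A B * form2 K (?X A B) S)"
    by (simp add: w sum_distrib_left algebra_simps)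
  also have "(\<Sum>A<K. \<Sum>B<K. h q A B * form2 K (?X A B) S) = form2 K (\<lambda>B' C'. \<Sum>A<K. \<Sum>B<K. h q A B * ?X A B B' C') S"
    by (simp only: form2_sum[symmetric] form2_scale[symmetric])
  also have "\<dots> = form2 K (P4 i j) S"
  proof (rule fun_cong[OF form2_cong])
    fix B' C' assume BC: "B' < K" "C' < K"
    show "(\<Sum>A<K. \<Sum>B<K. h q A B * ?X A B B' C') = P4 i j B' C'"
      unfolding P4_def mm_def tr_def Hq_def cut_def
      by (auto simp: sum_distrib_left algebra_simps intro!: sum.cong)
  qed
  finally show ?thesis .
qed

lemma T3: "(\<Sum>A<K. \<Sum>B<K. \<Sum>C<K. gq A B * curv K Gam q C A i j * w2 B C S) = form2 K (P3 i j) S"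
proof -
  have "(\<Sum>A<K. \<Sum>B<K. \<Sum>C<K. gq A B * curv K Gam q C A i j * w2 B C S)
      = (\<Sum>B<K. \<Sum>C<K. \<Sum>A<K. gq A B * curv K Gam q C A i j * w2 B C S)" by (rule sum_rot3)
  also have "\<dots> = form2 K (\<lambda>B C. \<Sum>A<K. gq A B * curv K Gam q C A i j) S"
    unfolding form2_def by (simp add: sum_distrib_right)
  also have "\<dots> = form2 K (P3 i j) S"
  proof (rule fun_cong[OF form2_cong])
    fix B C assume BC: "B < K" "C < K"
    show "(\<Sum>A<K. gq A B * curv K Gam q C A i j) = P3 i j B C"
      unfolding P3_def mm_def[of K gq]
      using BC by (auto simp: curv_val Dm_def cut_def gsym intro!: sum.cong)
  qed
  finally show ?thesis .
qed

lemma P1_eq: "P1 i j B C = mm K gq (Dm j i) B C - 2 * Y j i B C"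
proof -
  have "P1 i j = mm K gq (Dm j i) + (- Y j i + - Y j i)"
    unfolding P1_def by (simp only: trM diff_minus_eq_add mm_add_r L1)
  then show ?thesis by simp
qed

lemma P3_eq: "P3 i j B C = mm K gq (Dm i j) B C - mm K gq (Dm j i) B C + Y j i B C - Y i j B C"
  unfolding P3_def by (simp add: mm_add_r mm_diff_r Y_def)

lemma P4_eq: "P4 i j B C = - 4 * Y i j B C"
proof -
  have "P4 i j = - (Y i j + Y i j) + - (Y i j + Y i j)"
    unfolding P4_def trN by (simp only: Nm_eq mm_neg_l mm_add_l mm_add_r L2)
  then show ?thesis by (simp add: algebra_simps)
qed

lemma Ysym: "Y j i C B = Y i j B C"
  using L3[of j i] by (metis tr_def)

lemma claim5: "finite S \<Longrightarrow> rothstein K h Gam (rfun K h Gam i) (rfun K h Gam j) (q, p) S = 0"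
proof -
  assume fS: "finite S"
  have r: "rothstein K h Gam (rfun K h Gam i) (rfun K h Gam j) (q, p) S =
     nablaq K Gam (rfun K h Gam i) j (q, p) S - nablaq K Gam (rfun K h Gam j) i (q, p) S
     - 1/2 * (\<Sum>A<K. \<Sum>B<K. \<Sum>C<K. gq A B * curv K Gam q C A i j * w2 B C S)
     + (\<Sum>A<K. \<Sum>B<K. h q A B * (ejnt A (rfun K h Gam i (q, p)) \<and>\<^sub>e eint B (rfun K h Gam j (q, p))) S)"
    by (simp add: rothstein_def esum_def dp_rfun wedge_escal_right[OF fS] wedge_escal_left[OF fS] gq_def)
  also have "\<dots> = (- (1/2)) * form2 K (P1 i j) S + (1/2) * form2 K (P1 j i) S
       + (- (1/2)) * form2 K (P3 i j) S + (- (1/4)) * form2 K (P4 i j) S"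
    by (simp add: nablaq_rfun T3 T4)
  also have "\<dots> = form2 K (\<lambda>B C. (- (1/2)) * P1 i j B C + (1/2) * P1 j i B C
       + (- (1/2)) * P3 i j B C + (- (1/4)) * P4 i j B C) S"
    by (rule comb4)
  also have "\<dots> = 0"
  proof (rule form2_sym_zero)
    fix B C
    have y: "Y j i B C = Y i j C B" "Y j i C B = Y i j B C" using Ysym by auto
    show "- (1/2) * P1 i j B C + 1/2 * P1 j i B C + - (1/2) * P3 i j B C + - (1/4) * P4 i j B C =
          - (1/2) * P1 i j C B + 1/2 * P1 j i C B + - (1/2) * P3 i j C B + - (1/4) * P4 i j C B"
      unfolding P1_eq P3_eq P4_eq y by (simp add: field_simps)
  qed
  finally show ?thesis .
qed


lemma claim6: "finite S \<Longrightarrow> A < K \<Longrightarrow> rothstein K h Gam (rfun K h Gam i) (pb (\<lambda>_. ebasis A)) (q, p) S = 0"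
proof -
  assume fS: "finite S" and A: "A < K"
  have r: "rothstein K h Gam (rfun K h Gam i) (pb (\<lambda>_. ebasis A)) (q, p) S =
     - nablaq K Gam (pb (\<lambda>_. ebasis A)) i (q, p) S + (\<Sum>A'<K. h q A' A * ejnt A' (rfun K h Gam i (q, p)) S)"
    using A by (simp add: rothstein_def esum_def dp_rfun dp_pb wedge_escal_right[OF fS] wedge_escal_left[OF fS]
        eint_ebasis mult_if_right)
  have n: "nablaq K Gam (pb (\<lambda>_. ebasis A)) i (q, p) S = form1 K (\<lambda>B. Gam q i A B) S"
    by (simp add: nablaq_pb_ebasis[OF A])
  have "(\<Sum>A'<K. h q A' A * ejnt A' (rfun K h Gam i (q, p)) S) = (\<Sum>A'<K. h q A' A * (1/2 * form1 K (Nm i A') S))"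
    by (intro sum.cong refl) (simp add: ejnt_r)
  also have "\<dots> = form1 K (\<lambda>C. \<Sum>A'<K. h q A' A * (1/2 * Nm i A' C)) S"
    by (simp only: form1_scale form1_sum)
  also have "\<dots> = form1 K (\<lambda>B. Gam q i A B) S"
  proof (rule fun_cong[OF form1_cong])
    fix C assume C: "C < K"
    have "(\<Sum>A'<K. h q A' A * (1/2 * Nm i A' C)) = mm K Hq (Mm i) A C"
      unfolding mm_def Hq_def cut_def Nm_eq using A
      by (auto simp: hsym[of A] intro!: sum.cong)
    also have "\<dots> = Gam q i A C" using A C by (simp add: L4 Gm_def cut_def)
    finally show "(\<Sum>A'<K. h q A' A * (1/2 * Nm i A' C)) = Gam q i A C" .
  qed
  finally show ?thesis using r n by simp
qed

end

lemma claim1: "finite S \<Longrightarrow> rothstein K h Gam (qfun i) (rfun K h Gam j) (q, p) S = escal (if i = j then 1 else 0) S"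
  by (simp add: rothstein_def esum_def nablaq_qfun dp_rfun dp_qfun wedge_escal_escal ejnt_escal)
     (auto simp: escal_def)

lemma claim2: "A < K \<Longrightarrow> B < K \<Longrightarrow> rothstein K h Gam (pb (\<lambda>_. ebasis A)) (pb (\<lambda>_. ebasis B)) (q, p) S = escal (h q A B) S"
  by (simp add: rothstein_def esum_def dp_pb ejnt_ebasis eint_ebasis wedge_escal_escal)
     (auto simp: escal_def mult_if_right sum_if_const)

lemma claim3: "rothstein K h Gam (qfun i) (qfun j) (q, p) S = escal 0 S"
  by (simp add: rothstein_def esum_def dp_qfun ejnt_escal eint_escal escal0)

lemma claim4: "rothstein K h Gam (qfun i) (pb (\<lambda>_. ebasis A)) (q, p) S = escal 0 S"
  by (simp add: rothstein_def esum_def dp_qfun dp_pb ejnt_escal escal0)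

theorem mainTheorem9:
  fixes U :: "(real^'n::finite) set" and K :: nat
    and h :: "(real^'n::finite) \<Rightarrow> nat \<Rightarrow> nat \<Rightarrow> real"
    and Gam :: "(real^'n::finite) \<Rightarrow> 'n \<Rightarrow> nat \<Rightarrow> nat \<Rightarrow> real"
  assumes "open U"
    and "fiber_metric U K h"
    and "metric_connection U K h Gam"
    and const: "\<forall>A<K. \<forall>B<K. \<exists>c. \<forall>q\<in>U. h q A B = c"
    and "q \<in> U"
  shows
    "(\<forall>i j. rothstein K h Gam (qfun i) (rfun K h Gam j) (q,p) = escal (if i = j then 1 else 0))
   \<and> (\<forall>A<K. \<forall>B<K. rothstein K h Gam (pb (\<lambda>_. ebasis A)) (pb (\<lambda>_. ebasis B)) (q,p) = escal (h q A B))
   \<and> (\<forall>i j. rothstein K h Gam (qfun i) (qfun j) (q,p) = escal 0)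
   \<and> (\<forall>i. \<forall>A<K. rothstein K h Gam (qfun i) (pb (\<lambda>_. ebasis A)) (q,p) = escal 0)
   \<and> (\<forall>i j. rothstein K h Gam (rfun K h Gam i) (rfun K h Gam j) (q,p) = escal 0)
   \<and> (\<forall>i. \<forall>A<K. rothstein K h Gam (rfun K h Gam i) (pb (\<lambda>_. ebasis A)) (q,p) = escal 0)"
proof -
  interpret setting U K h Gam q using assms by (unfold_locales) auto
  have inf: "rothstein K h Gam \<phi> \<psi> (q, p) S = escal c S" if "infinite S" for \<phi> \<psi> c S
    using that by (simp add: rothstein_inf escal_inf)
  have c1: "rothstein K h Gam (qfun i) (rfun K h Gam j) (q,p) = escal (if i = j then 1 else 0)" for i j
  proof (rule ext)
    fix S show "rothstein K h Gam (qfun i) (rfun K h Gam j) (q,p) S = escal (if i = j then 1 else 0) S"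
      by (cases "finite S") (simp_all add: claim1 inf)
  qed
  have c2: "rothstein K h Gam (pb (\<lambda>_. ebasis A)) (pb (\<lambda>_. ebasis B)) (q,p) = escal (h q A B)"
    if "A < K" "B < K" for A B
    by (intro ext) (rule claim2[OF that])
  have c3: "rothstein K h Gam (qfun i) (qfun j) (q,p) = escal 0" for i j
    by (intro ext) (rule claim3)
  have c4: "rothstein K h Gam (qfun i) (pb (\<lambda>_. ebasis A)) (q,p) = escal 0" for i A
    by (intro ext) (rule claim4)
  have c5: "rothstein K h Gam (rfun K h Gam i) (rfun K h Gam j) (q,p) = escal 0" for i j
  proof (rule ext)
    fix S show "rothstein K h Gam (rfun K h Gam i) (rfun K h Gam j) (q,p) S = escal 0 S"
      by (cases "finite S") (simp_all add: claim5 rothstein_inf escal0)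
  qed
  have c6: "rothstein K h Gam (rfun K h Gam i) (pb (\<lambda>_. ebasis A)) (q,p) = escal 0" if "A < K" for i A
  proof (rule ext)
    fix S show "rothstein K h Gam (rfun K h Gam i) (pb (\<lambda>_. ebasis A)) (q,p) S = escal 0 S"
      by (cases "finite S") (simp_all add: claim6 that rothstein_inf escal0)
  qed
  show ?thesis using c1 c2 c3 c4 c5 c6 by blast
qed


end
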